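(* Let $k=d_1+d_2+d_3$ with $d_i$ positive integers, $\mathbb R^k=\mathbb R^{d_1}\times\mathbb R^{d_2}\times\mathbb R^{d_3}$ with coordinates $z=(x,y,t)$, and $\rho=y\cdot\partial_y+2t\cdot\partial_t$ (so $e^{-\ell\rho}(x,y,t)=(x,e^{-\ell}y,e^{-2\ell}t)$). Then the family of distributions $\delta(z'-e^{-\ell\rho}z)$, $1\le\ell\le+\infty$, on $\mathbb R^k\times\mathbb R^k$ is bounded in $\mathcal D'_{\Gamma_\rho}(\mathbb R^k\times\mathbb R^k)$, where $$\Gamma_\rho=\bigcup_{1\le\ell\le+\infty}\big\{((z,e^{-\ell\rho}z),(\lambda,e^{\ell\rho}\lambda)):(z,\lambda)\in T^*\mathbb R^k\big\}\subset T^*(\mathbb R^k\times\mathbb R^k).$$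
   Context: For a closed conic set $\Gamma$, $\mathcal D'_\Gamma(U)$ is the space of distributions whose wavefront set is contained in $\Gamma$, with its normal topology given by the seminorms $\sup_{\chi\in\mathcal B}|\langle\Lambda,\chi\rangle|$ ($\mathcal B$ bounded subsets of $C^\infty_c$) and $\sup_{\xi\in V}(1+|\xi|)^N|\widehat{\Lambda\chi}(\xi)|$ for $N\in\mathbb N$, $\chi\in C^\infty_c$ and closed cones $V$ with $(\mathrm{supp}\chi\times V)\cap\Gamma=\emptyset$. A family is bounded if all these seminorms are uniformly bounded. For $\ell=+\infty$, $e^{-\infty\rho}z=(x,0,0)$. *)

theory Defs
  imports "HOL-Analysis.Analysis" "HOL-Library.Extended_Real"
begin

fun dderiv :: "('e::euclidean_space \<Rightarrow> complex) \<Rightarrow> 'e list \<Rightarrow> 'e \<Rightarrow> complex" where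
  "dderiv f [] = f"
| "dderiv f (v # vs) = (\<lambda>z. frechet_derivative (dderiv f vs) (at z) v)"

definition smooth_fn :: "('e::euclidean_space \<Rightarrow> complex) \<Rightarrow> bool" where
  "smooth_fn f \<longleftrightarrow> (\<forall>vs z. dderiv f vs differentiable (at z))"

definition tsupp :: "('e::euclidean_space \<Rightarrow> complex) \<Rightarrow> 'e set" where
  "tsupp f = closure {z. f z \<noteq> 0}"

definition test_fn :: "('e::euclidean_space \<Rightarrow> complex) \<Rightarrow> bool" where
  "test_fn f \<longleftrightarrow> smooth_fn f \<and> compact (tsupp f)"

definition bounded_testset :: "('e::euclidean_space \<Rightarrow> complex) set \<Rightarrow> bool" where
  "bounded_testset B \<longleftrightarrow>
     (\<forall>f\<in>B. test_fn f) \<and>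
     (\<exists>K. compact K \<and> (\<forall>f\<in>B. tsupp f \<subseteq> K)) \<and>
     (\<forall>n. \<exists>C. \<forall>f\<in>B. \<forall>vs z. length vs = n \<and> (\<forall>v\<in>set vs. norm v \<le> 1)
                 \<longrightarrow> norm (dderiv f vs z) \<le> C)"

definition closed_cone :: "'e::euclidean_space set \<Rightarrow> bool" where
  "closed_cone V \<longleftrightarrow> closed V \<and> (\<forall>v\<in>V. \<forall>t>0. t *\<^sub>R v \<in> V)"

text \<open>Points of the cotangent bundle
  are pairs (point, covector), covectors identified with vectors via the inner
  product; the Fourier transform of F l times chi at xi is F l applied to
  chi(w) e^{-i xi.w}.\<close>
definition bounded_in_DGamma ::
  "('e::euclidean_space \<times> 'e) set \<Rightarrow> ('i \<Rightarrow> ('e \<Rightarrow> complex) \<Rightarrow> complex) \<Rightarrow> 'i set \<Rightarrow> bool" where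
  "bounded_in_DGamma \<Gamma> F L \<longleftrightarrow>
     (\<forall>l\<in>L. \<forall>f g a b. test_fn f \<and> test_fn g \<longrightarrow>
          F l (\<lambda>w. a * f w + b * g w) = a * F l f + b * F l g) \<and>
     (\<forall>B. bounded_testset B \<longrightarrow> (\<exists>C. \<forall>l\<in>L. \<forall>f\<in>B. norm (F l f) \<le> C)) \<and>
     (\<forall>N::nat. \<forall>chi V. test_fn chi \<and> closed_cone V \<and> (tsupp chi \<times> V) \<inter> \<Gamma> = {} \<longrightarrow>
        (\<exists>C. \<forall>l\<in>L. \<forall>\<xi>\<in>V.
            (1 + norm \<xi>) ^ N * norm (F l (\<lambda>w. chi w * cis (- (\<xi> \<bullet> w)))) \<le> C))"

definition escale :: "ereal \<Rightarrow> real" where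
  "escale l = (if l = \<infinity> then 0 else exp (- real_of_ereal l))"

definition dil :: "ereal \<Rightarrow> ('a::euclidean_space \<times> 'b::euclidean_space \<times> 'c::euclidean_space)
                    \<Rightarrow> 'a \<times> 'b \<times> 'c" where
  "dil l z = (fst z, escale l *\<^sub>R fst (snd z), (escale l)\<^sup>2 *\<^sub>R snd (snd z))"

definition delta_fam :: "ereal \<Rightarrow> ((('a::euclidean_space \<times> 'b::euclidean_space \<times> 'c::euclidean_space)
      \<times> ('a \<times> 'b \<times> 'c)) \<Rightarrow> complex) \<Rightarrow> complex" where
  "delta_fam l \<phi> = integral\<^sup>L lborel (\<lambda>z. \<phi> (z, dil l z))"

text \<open>Gamma_rho, parametrised by mu = e^{l rho} lambda (so lambda = e^{-l rho} mu),
  which makes sense also at l = +infinity; zero covectors excluded.\<close>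
definition Gamma_rho :: "((('a::euclidean_space \<times> 'b::euclidean_space \<times> 'c::euclidean_space)
      \<times> ('a \<times> 'b \<times> 'c)) \<times> (('a \<times> 'b \<times> 'c) \<times> ('a \<times> 'b \<times> 'c))) set" where
  "Gamma_rho = {((z, dil l z), (dil l \<mu>, \<mu>)) | l z \<mu>. 1 \<le> l \<and> \<mu> \<noteq> 0}"

text \<open>Kernel sign convention: Gamma' = {((z,z'),(xi,-eta)) | ((z,z'),(xi,eta)) in Gamma}.\<close>
definition twist :: "(('e::euclidean_space \<times> 'e) \<times> ('e \<times> 'e)) set \<Rightarrow> (('e \<times> 'e) \<times> ('e \<times> 'e)) set" where
  "twist G = {(p, (\<xi>, - \<eta>)) | p \<xi> \<eta>. (p, (\<xi>, \<eta>)) \<in> G}"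

end

theory Submission
  imports Defs
begin


lemma smooth_has_deriv:
  assumes "smooth_fn f"
  shows "(dderiv f vs has_derivative frechet_derivative (dderiv f vs) (at z)) (at z)"
  using assms unfolding smooth_fn_def by (simp add: frechet_derivative_works)

lemma smooth_cont:
  assumes "smooth_fn f"
  shows "continuous_on UNIV (dderiv f vs)"
  using assms unfolding smooth_fn_def
  by (meson continuous_at_imp_continuous_on differentiable_imp_continuous_within)

lemma smooth_cont0:
  assumes "smooth_fn f"
  shows "continuous_on UNIV f"
  using smooth_cont[OF assms, of "[]"] by simp

lemma dderiv_linear_slot:
  assumes "smooth_fn f"
  shows "linear (\<lambda>v. dderiv f (pre @ v # post) z)"
  using assms
proof (induction pre arbitrary: z)
  case Nil
  then show ?case
    using smooth_has_deriv[OF Nil, of post z]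
    by (simp add: has_derivative_bounded_linear bounded_linear.linear)
next
  case (Cons p pre)
  have IH: "\<And>z. linear (\<lambda>v. dderiv f (pre @ v # post) z)" using Cons by blast
  let ?H = "\<lambda>v. dderiv f (pre @ v # post)"
  have D: "\<And>v z. (?H v has_derivative frechet_derivative (?H v) (at z)) (at z)"
    using smooth_has_deriv[OF Cons.prems] by blast
  show ?case
  proof (rule linearI)
    fix x y
    have e: "?H (x + y) = (\<lambda>z. ?H x z + ?H y z)"
      by (rule ext) (simp add: linear_add[OF IH])
    have "((\<lambda>z. ?H x z + ?H y z) has_derivative (\<lambda>v. frechet_derivative (?H x) (at z) v + frechet_derivative (?H y) (at z) v)) (at z)"
      by (intro has_derivative_add D)
    then have "frechet_derivative (?H (x+y)) (at z) = (\<lambda>v. frechet_derivative (?H x) (at z) v + frechet_derivative (?H y) (at z) v)"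
      unfolding e by (rule frechet_derivative_at[symmetric])
    then show "dderiv f ((p # pre) @ (x + y) # post) z = dderiv f ((p # pre) @ x # post) z + dderiv f ((p # pre) @ y # post) z"
      by simp
  next
    fix c x
    have e: "?H (c *\<^sub>R x) = (\<lambda>z. c *\<^sub>R ?H x z)"
      by (rule ext) (simp add: linear_scale[OF IH])
    have "((\<lambda>z. c *\<^sub>R ?H x z) has_derivative (\<lambda>v. c *\<^sub>R frechet_derivative (?H x) (at z) v)) (at z)"
      by (intro has_derivative_scaleR_right D)
    then have "frechet_derivative (?H (c *\<^sub>R x)) (at z) = (\<lambda>v. c *\<^sub>R frechet_derivative (?H x) (at z) v)"
      unfolding e by (rule frechet_derivative_at[symmetric])
    then show "dderiv f ((p # pre) @ (c *\<^sub>R x) # post) z = c *\<^sub>R dderiv f ((p # pre) @ x # post) z"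
      by simp
  qed
qed

lemma dderiv_bound_aux:
  fixes f :: "'e::euclidean_space \<Rightarrow> complex"
  assumes sm: "smooth_fn f" and B: "\<And>bs z. set bs \<subseteq> Basis \<Longrightarrow> length bs = n \<Longrightarrow> norm (dderiv f bs z) \<le> B"
    and B0: "B \<ge> 0" and r: "r \<ge> 0"
  shows "set bs \<subseteq> Basis \<Longrightarrow> length vs + length bs = n \<Longrightarrow> (\<forall>v\<in>set vs. norm v \<le> r) \<Longrightarrow>
         norm (dderiv f (vs @ bs) z) \<le> (real DIM('e) * r) ^ length vs * B"
proof (induction vs arbitrary: bs rule: rev_induct)
  case Nil
  then show ?case using B by simp
next
  case (snoc v vs)
  have lin: "linear (\<lambda>v. dderiv f (vs @ v # bs) z)" by (rule dderiv_linear_slot[OF sm])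
  have "dderiv f (vs @ v # bs) z = dderiv f (vs @ (\<Sum>b\<in>Basis. (v \<bullet> b) *\<^sub>R b) # bs) z"
    by (simp add: euclidean_representation)
  also have "\<dots> = (\<Sum>b\<in>Basis. (v \<bullet> b) *\<^sub>R dderiv f (vs @ b # bs) z)"
    by (simp add: linear_sum[OF lin] linear_scale[OF lin])
  finally have eq: "dderiv f (vs @ v # bs) z = (\<Sum>b\<in>Basis. (v \<bullet> b) *\<^sub>R dderiv f (vs @ b # bs) z)" .
  have nv: "norm v \<le> r" using snoc.prems by simp
  have each: "norm ((v \<bullet> b) *\<^sub>R dderiv f (vs @ b # bs) z) \<le> r * ((real DIM('e) * r) ^ length vs * B)"
    if "b \<in> Basis" for b
  proof -
    have "norm (dderiv f (vs @ [b] @ bs) z) \<le> (real DIM('e) * r) ^ length vs * B"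
      using snoc.prems that by (intro snoc.IH) auto
    moreover have "\<bar>v \<bullet> b\<bar> \<le> r"
      using Basis_le_norm[OF that, of v] nv by linarith
    ultimately show ?thesis
      by (simp add: mult_mono' B0 r)
  qed
  have "norm (dderiv f (vs @ v # bs) z) \<le> (\<Sum>b\<in>Basis. norm ((v \<bullet> b) *\<^sub>R dderiv f (vs @ b # bs) z))"
    unfolding eq by (rule norm_sum)
  also have "\<dots> \<le> (\<Sum>b\<in>(Basis::'e set). r * ((real DIM('e) * r) ^ length vs * B))"
    by (rule sum_mono) (rule each)
  also have "\<dots> = (real DIM('e) * r) ^ length (vs @ [v]) * B"
    by (simp add: algebra_simps)
  finally show ?case by simp
qed

lemma dderiv_zero_outside:
  assumes sm: "smooth_fn f" and z: "z \<notin> tsupp f"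
  shows "dderiv f vs z = 0"
  using z
proof (induction vs arbitrary: z)
  case Nil
  then show ?case unfolding tsupp_def by (metis (mono_tags) closure_subset mem_Collect_eq subsetD dderiv.simps(1))
next
  case (Cons v vs)
  have op: "open (- tsupp f)" unfolding tsupp_def by auto
  have "((\<lambda>_. 0) has_derivative (\<lambda>_. 0)) (at z)" by simp
  then have "(dderiv f vs has_derivative (\<lambda>_. 0)) (at z)"
    by (rule has_derivative_transform_within_open[OF _ op]) (use Cons in auto)
  then have "frechet_derivative (dderiv f vs) (at z) = (\<lambda>_. 0)"
    by (rule frechet_derivative_at[symmetric])
  then show ?case by simp
qed

lemma test_fn_basis_bound:
  fixes f :: "'e::euclidean_space \<Rightarrow> complex"
  assumes tf: "test_fn f"
  shows "\<exists>B\<ge>0. \<forall>bs z. set bs \<subseteq> Basis \<and> length bs = n \<longrightarrow> norm (dderiv f bs z) \<le> B"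
proof -
  have sm: "smooth_fn f" and cp: "compact (tsupp f)" using tf unfolding test_fn_def by auto
  let ?S = "{bs. set bs \<subseteq> (Basis::'e set) \<and> length bs = n}"
  have fin: "finite ?S" by (rule finite_lists_length_eq) simp
  have bd: "bounded (range (dderiv f bs))" for bs
  proof -
    have "bounded (dderiv f bs ` tsupp f)"
      by (intro compact_imp_bounded compact_continuous_image cp continuous_on_subset[OF smooth_cont[OF sm]]) auto
    then have "bounded (insert 0 (dderiv f bs ` tsupp f))" by simp
    moreover have "range (dderiv f bs) \<subseteq> insert 0 (dderiv f bs ` tsupp f)"
      using dderiv_zero_outside[OF sm] by blast
    ultimately show ?thesis by (rule bounded_subset)
  qed
  have "bounded (\<Union>bs\<in>?S. range (dderiv f bs))"
    using fin bd by (simp add: bounded_UN)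
  then obtain B where B: "B > 0" "\<And>x. x \<in> (\<Union>bs\<in>?S. range (dderiv f bs)) \<Longrightarrow> norm x \<le> B"
    by (meson bounded_pos)
  show ?thesis
    by (rule exI[of _ B]) (use B in auto)
qed

lemma test_fn_bound:
  fixes f :: "'e::euclidean_space \<Rightarrow> complex"
  assumes tf: "test_fn f"
  shows "\<exists>B\<ge>0. \<forall>(r::real) (vs::'e list) z. r \<ge> 0 \<and> length vs = n \<and> (\<forall>v\<in>set vs. norm v \<le> r) \<longrightarrow>
            norm (dderiv f vs z) \<le> (real DIM('e) * r) ^ n * B"
proof -
  obtain B where B: "B \<ge> 0" "\<And>bs z. set bs \<subseteq> Basis \<Longrightarrow> length bs = n \<Longrightarrow> norm (dderiv f bs z) \<le> B"
    using test_fn_basis_bound[OF tf, of n] by blast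
  have sm: "smooth_fn f" using tf unfolding test_fn_def by auto
  show ?thesis
  proof (intro exI[of _ B] conjI[OF B(1)] allI impI)
    fix r and vs :: "'e list" and z assume a: "r \<ge> 0 \<and> length vs = n \<and> (\<forall>v\<in>set vs. norm v \<le> r)"
    then show "norm (dderiv f vs z) \<le> (real DIM('e) * r) ^ n * B"
      using dderiv_bound_aux[OF sm B(2) B(1), where r=r and bs="[]" and vs=vs and z=z] by auto
  qed
qed

lemma dderiv_compose_linear:
  assumes sm: "smooth_fn f" and L: "bounded_linear L"
  shows "dderiv (\<lambda>z. f (L z)) vs = (\<lambda>z. dderiv f (map L vs) (L z))"
proof (induction vs)
  case Nil
  then show ?case by simp
next
  case (Cons v vs)
  show ?case
  proof (rule ext)
    fix z
    have "((dderiv f (map L vs) \<circ> L) has_derivative (frechet_derivative (dderiv f (map L vs)) (at (L z)) \<circ> L)) (at z)"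
      by (rule diff_chain_at[OF bounded_linear_imp_has_derivative[OF L] smooth_has_deriv[OF sm]])
    then have "((\<lambda>z. dderiv f (map L vs) (L z)) has_derivative (frechet_derivative (dderiv f (map L vs)) (at (L z)) \<circ> L)) (at z)"
      by (simp add: comp_def)
    then have "frechet_derivative (\<lambda>z. dderiv f (map L vs) (L z)) (at z) = (frechet_derivative (dderiv f (map L vs)) (at (L z)) \<circ> L)"
      by (rule frechet_derivative_at[symmetric])
    then show "dderiv (\<lambda>z. f (L z)) (v # vs) z = dderiv f (map L (v # vs)) (L z)"
      using Cons by simp
  qed
qed

lemma smooth_compose_linear:
  assumes sm: "smooth_fn f" and L: "bounded_linear L"
  shows "smooth_fn (\<lambda>z. f (L z))"
  unfolding smooth_fn_def
proof (intro allI)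
  fix vs z
  have "((dderiv f (map L vs) \<circ> L) has_derivative (frechet_derivative (dderiv f (map L vs)) (at (L z)) \<circ> L)) (at z)"
    by (rule diff_chain_at[OF bounded_linear_imp_has_derivative[OF L] smooth_has_deriv[OF sm]])
  then show "dderiv (\<lambda>z. f (L z)) vs differentiable at z"
    unfolding dderiv_compose_linear[OF sm L] comp_def differentiable_def by blast
qed

definition fd :: "'e::euclidean_space \<Rightarrow> ('e \<Rightarrow> complex) \<Rightarrow> 'e \<Rightarrow> complex" where
  "fd s h = (\<lambda>z. h z - h (z + s))"

lemma has_derivative_fd:
  assumes "\<And>y. (H has_derivative D y) (at y)"
  shows "(fd s H has_derivative (\<lambda>v. D z v - D (z + s) v)) (at z)"
proof -
  have t: "((\<lambda>z. z + s) has_derivative id) (at z)"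
    using has_derivative_add_const[OF has_derivative_ident] by (simp add: id_def)
  have "((H \<circ> (\<lambda>z. z + s)) has_derivative (D (z + s) \<circ> id)) (at z)"
    by (rule diff_chain_at[OF t assms])
  then have "((\<lambda>z. H (z + s)) has_derivative D (z + s)) (at z)"
    by (simp add: comp_def id_def)
  then show ?thesis unfolding fd_def
    by (intro has_derivative_diff assms)
qed

lemma dderiv_fd:
  assumes sm: "smooth_fn h"
  shows "dderiv (fd s h) vs = fd s (dderiv h vs)"
proof (induction vs)
  case Nil
  then show ?case by simp
next
  case (Cons v vs)
  show ?case
  proof (rule ext)
    fix z
    have "(fd s (dderiv h vs) has_derivative (\<lambda>v. frechet_derivative (dderiv h vs) (at z) v - frechet_derivative (dderiv h vs) (at (z + s)) v)) (at z)"
      by (rule has_derivative_fd[OF smooth_has_deriv[OF sm]])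
    then have "frechet_derivative (fd s (dderiv h vs)) (at z) = (\<lambda>v. frechet_derivative (dderiv h vs) (at z) v - frechet_derivative (dderiv h vs) (at (z + s)) v)"
      by (rule frechet_derivative_at[symmetric])
    then show "dderiv (fd s h) (v # vs) z = fd s (dderiv h (v # vs)) z"
      using Cons by (simp add: fd_def)
  qed
qed

lemma smooth_fd:
  assumes sm: "smooth_fn h"
  shows "smooth_fn (fd s h)"
  unfolding smooth_fn_def dderiv_fd[OF sm]
proof (intro allI)
  fix vs z
  show "fd s (dderiv h vs) differentiable at z"
    using has_derivative_fd[OF smooth_has_deriv[OF sm]] unfolding differentiable_def by blast
qed

lemma fd_mvt:
  fixes H :: "'e::euclidean_space \<Rightarrow> complex"
  assumes D: "\<And>y. (H has_derivative D y) (at y)" and M: "\<And>y. norm (D y s) \<le> M"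
  shows "norm (fd s H z) \<le> M"
proof -
  define \<phi> where "\<phi> t = H (z + t *\<^sub>R s)" for t :: real
  have dphi: "(\<phi> has_derivative (\<lambda>t. D (z + x *\<^sub>R s) (t *\<^sub>R s))) (at x)" for x
  proof -
    have a: "((\<lambda>t. z + t *\<^sub>R s) has_derivative (\<lambda>t. t *\<^sub>R s)) (at x)"
      using has_derivative_add_const[OF bounded_linear_imp_has_derivative[OF bounded_linear_scaleR_left[of s]], where c=z and net="at x"]
      by (simp add: add.commute)
    have "((H \<circ> (\<lambda>t. z + t *\<^sub>R s)) has_derivative (D (z + x *\<^sub>R s) \<circ> (\<lambda>t. t *\<^sub>R s))) (at x)"
      by (rule diff_chain_at[OF a D])
    then show ?thesis by (simp add: \<phi>_def[abs_def] comp_def)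
  qed
  have cont: "continuous_on {0..1} \<phi>"
    using dphi by (intro continuous_at_imp_continuous_on ballI has_derivative_continuous) blast
  obtain x where "norm (\<phi> 1 - \<phi> 0) \<le> norm (D (z + x *\<^sub>R s) ((1 - 0) *\<^sub>R s))"
    using mvt_general[of 0 1 \<phi>, OF _ cont dphi] by auto
  then have "norm (\<phi> 1 - \<phi> 0) \<le> M" using M[of "z + x *\<^sub>R s"] by simp
  moreover have "fd s H z = - (\<phi> 1 - \<phi> 0)" by (simp add: fd_def \<phi>_def)
  ultimately show ?thesis by (simp add: norm_minus_commute)
qed

lemma fd_iter_bound:
  fixes h :: "'e::euclidean_space \<Rightarrow> complex"
  shows "smooth_fn h \<Longrightarrow> (\<And>y. norm (dderiv h (replicate N s) y) \<le> M) \<Longrightarrow> norm ((fd s ^^ N) h z) \<le> M"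
proof (induction N arbitrary: h)
  case 0
  then show ?case using "0.prems"(2)[of z] by simp
next
  case (Suc N)
  have sm': "smooth_fn (fd s h)" by (rule smooth_fd[OF Suc.prems(1)])
  have "norm (dderiv (fd s h) (replicate N s) y) \<le> M" for y
  proof -
    have "dderiv (fd s h) (replicate N s) y = fd s (dderiv h (replicate N s)) y"
      by (simp add: dderiv_fd[OF Suc.prems(1)])
    also have "norm \<dots> \<le> M"
    proof (rule fd_mvt[OF smooth_has_deriv[OF Suc.prems(1)]])
      fix y
      show "norm (frechet_derivative (dderiv h (replicate N s)) (at y) s) \<le> M"
        using Suc.prems(2)[of y] by simp
    qed
    finally show ?thesis .
  qed
  then have "norm ((fd s ^^ N) (fd s h) z) \<le> M" by (rule Suc.IH[OF sm'])
  then show ?case unfolding funpow_Suc_right comp_apply .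
qed



lemma integrable_supp:
  fixes h :: "'e::euclidean_space \<Rightarrow> complex"
  assumes c: "continuous_on UNIV h" and s: "\<And>z. R < norm z \<Longrightarrow> h z = 0"
  shows "integrable lborel h"
proof -
  have "integrable lborel (\<lambda>x. indicator (cball 0 R) x *\<^sub>R h x)"
    by (rule borel_integrable_compact) (auto intro: continuous_on_subset[OF c])
  moreover have "(\<lambda>x. indicator (cball 0 R) x *\<^sub>R h x) = h"
    using s by (auto simp: indicator_def fun_eq_iff)
  ultimately show ?thesis by simp
qed

lemma integral_bound_supp:
  fixes h :: "'e::euclidean_space \<Rightarrow> complex"
  assumes c: "continuous_on UNIV h" and s: "\<And>z. R < norm z \<Longrightarrow> h z = 0"
    and M: "\<And>z. norm (h z) \<le> M"
  shows "norm (integral\<^sup>L lborel h) \<le> M * measure lborel (cball (0::'e) R)"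
proof -
  have ii: "integrable lborel (indicator (cball (0::'e) R) :: 'e \<Rightarrow> real)"
    using emeasure_bounded_finite[OF bounded_cball[of 0 R]] by (subst integrable_indicator_iff) auto
  have "norm (integral\<^sup>L lborel h) \<le> integral\<^sup>L lborel (\<lambda>x. norm (h x))"
    by (rule integral_norm_bound)
  also have "\<dots> \<le> integral\<^sup>L lborel (\<lambda>x. M * indicator (cball (0::'e) R) x)"
  proof (rule Bochner_Integration.integral_mono)
    show "integrable lborel (\<lambda>x. norm (h x))" by (intro integrable_norm integrable_supp[OF c s])
    show "integrable lborel (\<lambda>x. M * indicator (cball (0::'e) R) x)" using ii by simp
    fix x show "norm (h x) \<le> M * indicator (cball (0::'e) R) x"
      using M[of x] s[of x] by (auto simp: indicator_def)
  qed
  also have "\<dots> = M * measure lborel (cball (0::'e) R)" by simp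
  finally show ?thesis .
qed

lemma fd_supp:
  assumes "\<And>z. R < norm z \<Longrightarrow> h z = 0"
  shows "R + norm s < norm z \<Longrightarrow> fd s h z = 0"
proof -
  assume a: "R + norm s < norm z"
  have "norm z \<le> norm (z + s) + norm s" by (metis add_diff_cancel norm_triangle_ineq4)
  then have "R < norm (z + s)" using a by linarith
  moreover have "R < norm z" using a by (smt (verit) norm_ge_zero)
  ultimately show ?thesis using assms by (simp add: fd_def)
qed

lemma fd_integral:
  fixes h :: "'e::euclidean_space \<Rightarrow> complex"
  assumes c: "continuous_on UNIV h" and s: "\<And>z. R < norm z \<Longrightarrow> h z = 0"
    and us: "u \<bullet> d = pi"
  shows "integral\<^sup>L lborel (\<lambda>z. fd d h z * cis (- (u \<bullet> z))) = 2 * integral\<^sup>L lborel (\<lambda>z. h z * cis (- (u \<bullet> z)))"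
proof -
  have cc: "continuous_on UNIV (\<lambda>z. cis (- (u \<bullet> z)))"
    unfolding cis_conv_exp by (intro continuous_intros)
  have i1: "integrable lborel (\<lambda>z. h z * cis (- (u \<bullet> z)))"
    by (rule integrable_supp[where R=R]) (auto intro!: continuous_intros c cc simp: s)
  have c2: "continuous_on UNIV (\<lambda>z. h (z + d))"
    by (rule continuous_on_compose2[OF c]) (auto intro!: continuous_intros)
  have s2: "h (z + d) = 0" if "R + norm d < norm z" for z
  proof -
    have "fd d h z = 0" by (rule fd_supp[OF s that])
    moreover have "h z = 0" using that by (intro s) (smt (verit) norm_ge_zero)
    ultimately show ?thesis by (simp add: fd_def)
  qed
  have i2: "integrable lborel (\<lambda>z. h (z + d) * cis (- (u \<bullet> z)))"
    by (rule integrable_supp[where R="R + norm d"]) (auto intro!: continuous_intros c2 cc simp: s2)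
  define f where "f w = h w * cis (- (u \<bullet> w)) * cis pi" for w
  have fm: "f \<in> borel_measurable borel"
    unfolding f_def by (intro borel_measurable_continuous_onI continuous_intros c cc)
  have "integral\<^sup>L lborel f = integral\<^sup>L (distr lborel borel ((+) d)) f"
    by (simp add: lborel_distr_plus)
  also have "\<dots> = integral\<^sup>L lborel (\<lambda>x. f (d + x))"
    by (rule integral_distr) (auto simp: fm)
  finally have tr: "integral\<^sup>L lborel f = integral\<^sup>L lborel (\<lambda>x. f (d + x))" .
  have "f (d + x) = h (x + d) * cis (- (u \<bullet> x))" for x
  proof -
    have cm: "cis (- pi - a) = - cis (- a)" for a
    proof -
      have "cis (- pi - a) = cis (- a) * cis (- pi)" by (subst cis_mult) (simp add: algebra_simps)
      moreover have "cis (- pi) = -1" by (simp add: complex_eq_iff)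
      ultimately show ?thesis by simp
    qed
    have "cis (- (u \<bullet> (d + x))) * cis pi = cis (- (u \<bullet> x))"
      using us by (simp add: inner_add_right cis_mult cm)
    moreover have "f (d + x) = h (d + x) * (cis (- (u \<bullet> (d + x))) * cis pi)"
      by (simp only: f_def mult.assoc)
    ultimately show ?thesis by (simp add: add.commute)
  qed
  then have "integral\<^sup>L lborel (\<lambda>z. h (z + d) * cis (- (u \<bullet> z))) = integral\<^sup>L lborel f"
    using tr by simp
  also have "\<dots> = - integral\<^sup>L lborel (\<lambda>z. h z * cis (- (u \<bullet> z)))"
    unfolding f_def by simp
  finally have e: "integral\<^sup>L lborel (\<lambda>z. h (z + d) * cis (- (u \<bullet> z))) = - integral\<^sup>L lborel (\<lambda>z. h z * cis (- (u \<bullet> z)))" .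
  have "integral\<^sup>L lborel (\<lambda>z. fd d h z * cis (- (u \<bullet> z))) =
        integral\<^sup>L lborel (\<lambda>z. h z * cis (- (u \<bullet> z)) - h (z + d) * cis (- (u \<bullet> z)))"
    by (simp add: fd_def algebra_simps)
  also have "\<dots> = integral\<^sup>L lborel (\<lambda>z. h z * cis (- (u \<bullet> z))) - integral\<^sup>L lborel (\<lambda>z. h (z + d) * cis (- (u \<bullet> z)))"
    by (rule Bochner_Integration.integral_diff[OF i1 i2])
  finally show ?thesis using e by simp
qed

lemma cis_cont: "continuous_on UNIV (\<lambda>z. cis (- (u \<bullet> z)))"
  unfolding cis_conv_exp by (intro continuous_intros)

lemma decay:
  fixes g :: "'e::euclidean_space \<Rightarrow> complex"
  assumes sm: "smooth_fn g" and supp: "\<And>z. R < norm z \<Longrightarrow> g z = 0"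
    and us: "u \<bullet> d = pi" and nd: "norm d \<le> pi"
    and M: "\<And>y. norm (dderiv g (replicate N d) y) \<le> M"
  shows "2 ^ N * norm (integral\<^sup>L lborel (\<lambda>z. g z * cis (- (u \<bullet> z)))) \<le> M * measure lborel (cball (0::'e) (R + N * pi))"
proof -
  define G where "G k = (fd d ^^ k) g" for k
  have GS: "G (Suc k) = fd d (G k)" for k by (simp add: G_def)
  have nice: "smooth_fn (G k) \<and> (\<forall>z. R + k * norm d < norm z \<longrightarrow> G k z = 0)" for k
  proof (induction k)
    case 0
    then show ?case using sm supp by (simp add: G_def)
  next
    case (Suc k)
    have "smooth_fn (G (Suc k))" unfolding GS using Suc smooth_fd by blast
    moreover have "G (Suc k) z = 0" if "R + real (Suc k) * norm d < norm z" for z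
      unfolding GS
      by (rule fd_supp[of "R + k * norm d"]) (use Suc that in \<open>auto simp: algebra_simps\<close>)
    ultimately show ?case by blast
  qed
  have int: "integral\<^sup>L lborel (\<lambda>z. G k z * cis (- (u \<bullet> z))) = 2 ^ k * integral\<^sup>L lborel (\<lambda>z. g z * cis (- (u \<bullet> z)))" for k
  proof (induction k)
    case 0
    then show ?case by (simp add: G_def)
  next
    case (Suc k)
    have "integral\<^sup>L lborel (\<lambda>z. G (Suc k) z * cis (- (u \<bullet> z))) = 2 * integral\<^sup>L lborel (\<lambda>z. G k z * cis (- (u \<bullet> z)))"
      unfolding GS
      by (rule fd_integral[OF smooth_cont0 _ us, where R="R + k * norm d"]) (use nice in auto)
    then show ?case using Suc by simp
  qed
  have bN: "norm (G N z) \<le> M" for z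
    unfolding G_def by (rule fd_iter_bound[OF sm M])
  have kd: "R + real N * norm d \<le> R + N * pi"
    using nd by (simp add: mult_left_mono)
  have "norm (integral\<^sup>L lborel (\<lambda>z. G N z * cis (- (u \<bullet> z)))) \<le> M * measure lborel (cball (0::'e) (R + N * pi))"
  proof (rule integral_bound_supp)
    show "continuous_on UNIV (\<lambda>z. G N z * cis (- (u \<bullet> z)))"
      using nice[of N] by (intro continuous_intros smooth_cont0 cis_cont) auto
    fix z
    show "R + real N * pi < norm z \<Longrightarrow> G N z * cis (- (u \<bullet> z)) = 0"
      using nice[of N] kd by auto
    show "norm (G N z * cis (- (u \<bullet> z))) \<le> M" using bN[of z] by (simp add: norm_mult)
  qed
  then show ?thesis unfolding int by (simp add: norm_mult norm_power)
qed



definition dilr :: "real \<Rightarrow> ('a::euclidean_space \<times> 'b::euclidean_space \<times> 'c::euclidean_space) \<Rightarrow> 'a \<times> 'b \<times> 'c" where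
  "dilr e z = (fst z, e *\<^sub>R fst (snd z), e\<^sup>2 *\<^sub>R snd (snd z))"

lemma dil_dilr: "dil l = dilr (escale l)"
  by (rule ext) (simp add: dil_def dilr_def)

lemma escale_range:
  assumes "1 \<le> l" shows "0 \<le> escale l \<and> escale l \<le> exp (-1)"
proof (cases "l = \<infinity>")
  case True then show ?thesis by (simp add: escale_def)
next
  case False
  then obtain r where r: "l = ereal r" using assms by (cases l) auto
  then have "1 \<le> r" using assms by simp
  then show ?thesis using r by (simp add: escale_def)
qed

lemma escale_surj:
  assumes "0 \<le> e" "e \<le> exp (-1)" shows "\<exists>l. 1 \<le> l \<and> escale l = e"
proof (cases "e = 0")
  case True then show ?thesis by (intro exI[of _ \<infinity>]) (simp add: escale_def)
next
  case False
  then have ep: "e > 0" using assms by simp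
  have "ln e \<le> ln (exp (-1))" using assms ep by (subst ln_le_cancel_iff) auto
  then have "ln e \<le> -1" by simp
  then show ?thesis using ep
    by (intro exI[of _ "ereal (- ln e)"]) (simp add: escale_def)
qed

lemma dilr_linear: "bounded_linear (dilr e)"
proof -
  have "linear (dilr e)"
    by (rule linearI) (simp_all add: dilr_def algebra_simps scaleR_add_right)
  then show ?thesis by (simp add: linear_conv_bounded_linear)
qed

lemma dilr_minus: "dilr e (- x) = - dilr e x"
  by (simp add: dilr_def)

lemma dilr_scale: "dilr e (c *\<^sub>R x) = c *\<^sub>R dilr e x"
  by (simp add: dilr_def)

lemma dilr_norm:
  assumes "0 \<le> e" "e \<le> 1" shows "norm (dilr e z) \<le> norm z"
proof -
  obtain a b c where z: "z = (a, b, c)" by (cases z) auto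
  have e2: "e\<^sup>2 \<le> 1" using assms by (simp add: power_le_one)
  have e4: "(e\<^sup>2)\<^sup>2 \<le> 1" using e2 assms by (simp add: power_le_one)
  have h1: "norm (e *\<^sub>R b) \<le> norm b" using assms by (simp add: mult_left_le_one_le)
  have h2: "norm (e\<^sup>2 *\<^sub>R c) \<le> norm c" using e2 by (simp add: mult_left_le_one_le)
  have s1: "(norm (e *\<^sub>R b))\<^sup>2 \<le> (norm b)\<^sup>2" by (rule power_mono[OF h1 norm_ge_zero])
  have s2: "(norm (e\<^sup>2 *\<^sub>R c))\<^sup>2 \<le> (norm c)\<^sup>2" by (rule power_mono[OF h2 norm_ge_zero])
  have eq1: "(norm (dilr e z))\<^sup>2 = (norm a)\<^sup>2 + ((norm (e *\<^sub>R b))\<^sup>2 + (norm (e\<^sup>2 *\<^sub>R c))\<^sup>2)"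
    unfolding z dilr_def by (simp add: norm_Pair del: norm_scaleR)
  have eq2: "(norm z)\<^sup>2 = (norm a)\<^sup>2 + ((norm b)\<^sup>2 + (norm c)\<^sup>2)"
    unfolding z by (simp add: norm_Pair)
  have "(norm (dilr e z))\<^sup>2 \<le> (norm z)\<^sup>2" using eq1 eq2 s1 s2 by linarith
  then show ?thesis by (simp add: power2_le_iff_abs_le)
qed

lemma dilr_inner: "x \<bullet> dilr e z = dilr e x \<bullet> z"
  by (simp add: dilr_def inner_Pair_0 prod_eq_iff inner_prod_def)

lemma L_linear: "bounded_linear (\<lambda>z. (z, dilr e z))"
  by (intro bounded_linear_Pair bounded_linear_ident dilr_linear)

lemma L_norm:
  assumes "0 \<le> e" "e \<le> 1" shows "norm z \<le> norm (z, dilr e z)" "norm (z, dilr e z) \<le> 2 * norm z"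
proof -
  show "norm z \<le> norm (z, dilr e z)" by (rule norm_fst_le)
  have "norm (z, dilr e z) \<le> norm z + norm (dilr e z)" by (rule norm_Pair_le)
  then show "norm (z, dilr e z) \<le> 2 * norm z" using dilr_norm[OF assms, of z] by simp
qed

lemma L_inner: "\<xi> \<bullet> (z, dilr e z) = (fst \<xi> + dilr e (snd \<xi>)) \<bullet> z"
  by (cases \<xi>) (simp add: inner_add_left dilr_inner)



lemma twist_mem:
  fixes chi :: "(('a::euclidean_space \<times> 'b::euclidean_space \<times> 'c::euclidean_space) \<times> ('a \<times> 'b \<times> 'c)) \<Rightarrow> complex"
  assumes disj: "(tsupp chi \<times> V) \<inter> twist (Gamma_rho :: ((('a \<times> 'b \<times> 'c) \<times> ('a \<times> 'b \<times> 'c)) \<times> (('a \<times> 'b \<times> 'c) \<times> ('a \<times> 'b \<times> 'c))) set) = {}"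
    and e: "0 \<le> e" "e \<le> exp (-1)" and z: "(z, dilr e z) \<in> tsupp chi" and w: "w \<in> V" "w \<noteq> 0"
  shows "fst w + dilr e (snd w) \<noteq> 0"
proof
  assume h: "fst w + dilr e (snd w) = 0"
  obtain l where l: "1 \<le> l" "escale l = e" using escale_surj[OF e] by blast
  define \<mu> where "\<mu> = - snd w"
  have fw: "fst w = dil l \<mu>"
    using h unfolding \<mu>_def dil_dilr l(2) dilr_minus by (simp add: eq_neg_iff_add_eq_0)
  have "\<mu> \<noteq> 0"
  proof
    assume "\<mu> = 0"
    then have "snd w = 0" by (simp add: \<mu>_def)
    moreover have "fst w = 0" using fw \<open>\<mu> = 0\<close> by (simp add: dil_def zero_prod_def)
    ultimately show False using w(2) by (simp add: prod_eq_iff)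
  qed
  have g: "((z, dil l z), (dil l \<mu>, \<mu>)) \<in> (Gamma_rho :: ((('a \<times> 'b \<times> 'c) \<times> ('a \<times> 'b \<times> 'c)) \<times> (('a \<times> 'b \<times> 'c) \<times> ('a \<times> 'b \<times> 'c))) set)"
    unfolding Gamma_rho_def using l(1) \<open>\<mu> \<noteq> 0\<close> by blast
  have "((z, dil l z), (dil l \<mu>, - \<mu>)) \<in> twist (Gamma_rho :: ((('a \<times> 'b \<times> 'c) \<times> ('a \<times> 'b \<times> 'c)) \<times> (('a \<times> 'b \<times> 'c) \<times> ('a \<times> 'b \<times> 'c))) set)"
    unfolding twist_def using g by blast
  moreover have "(dil l \<mu>, - \<mu>) = w" using fw by (simp add: \<mu>_def prod_eq_iff)
  moreover have "(z, dil l z) = (z, dilr e z)" by (simp add: dil_dilr l(2))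
  ultimately have "((z, dilr e z), w) \<in> twist (Gamma_rho :: ((('a \<times> 'b \<times> 'c) \<times> ('a \<times> 'b \<times> 'c)) \<times> (('a \<times> 'b \<times> 'c) \<times> ('a \<times> 'b \<times> 'c))) set)"
    by simp
  then show False using disj z w(1) by blast
qed

lemma cone_bound:
  fixes chi :: "(('a::euclidean_space \<times> 'b::euclidean_space \<times> 'c::euclidean_space) \<times> ('a \<times> 'b \<times> 'c)) \<Rightarrow> complex"
  assumes K: "compact (tsupp chi)" and V: "closed_cone V"
    and disj: "(tsupp chi \<times> V) \<inter> twist (Gamma_rho :: ((('a \<times> 'b \<times> 'c) \<times> ('a \<times> 'b \<times> 'c)) \<times> (('a \<times> 'b \<times> 'c) \<times> ('a \<times> 'b \<times> 'c))) set) = {}"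
  shows "\<exists>c>0. \<forall>e z w. 0 \<le> e \<longrightarrow> e \<le> exp (-1) \<longrightarrow> (z, dilr e z) \<in> tsupp chi \<longrightarrow> w \<in> V \<longrightarrow>
            c * norm w \<le> norm (fst w + dilr e (snd w))"
proof -
  obtain R where R: "\<And>p. p \<in> tsupp chi \<Longrightarrow> norm p \<le> R"
    using compact_imp_bounded[OF K] by (meson bounded_iff)
  have Vc: "closed V" and Vcone: "\<And>v t. v \<in> V \<Longrightarrow> t > 0 \<Longrightarrow> t *\<^sub>R v \<in> V"
    using V unfolding closed_cone_def by auto
  define T where "T = {p :: real \<times> ('a \<times> 'b \<times> 'c) \<times> (('a \<times> 'b \<times> 'c) \<times> ('a \<times> 'b \<times> 'c)).
      0 \<le> fst p \<and> fst p \<le> exp (-1) \<and> (fst (snd p), dilr (fst p) (fst (snd p))) \<in> tsupp chi \<and>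
      snd (snd p) \<in> V \<and> norm (snd (snd p)) = 1}"
  define \<phi> where "\<phi> p = norm (fst (snd (snd p)) + dilr (fst p) (snd (snd (snd p))))"
    for p :: "real \<times> ('a \<times> 'b \<times> 'c) \<times> (('a \<times> 'b \<times> 'c) \<times> ('a \<times> 'b \<times> 'c))"
  have contd: "continuous_on UNIV (\<lambda>p::real \<times> ('a \<times> 'b \<times> 'c) \<times> (('a \<times> 'b \<times> 'c) \<times> ('a \<times> 'b \<times> 'c)). (fst (snd p), dilr (fst p) (fst (snd p))))"
    unfolding dilr_def by (intro continuous_intros)
  have contphi: "continuous_on UNIV \<phi>"
    unfolding \<phi>_def dilr_def by (intro continuous_intros)
  have clT: "closed T"
    unfolding T_def
  proof (intro closed_Collect_conj)
    show "closed {x::real \<times> ('a \<times> 'b \<times> 'c) \<times> (('a \<times> 'b \<times> 'c) \<times> ('a \<times> 'b \<times> 'c)). 0 \<le> fst x}"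
      by (intro closed_Collect_le continuous_intros)
    show "closed {x::real \<times> ('a \<times> 'b \<times> 'c) \<times> (('a \<times> 'b \<times> 'c) \<times> ('a \<times> 'b \<times> 'c)). fst x \<le> exp (-1)}"
      by (intro closed_Collect_le continuous_intros)
    show "closed {x::real \<times> ('a \<times> 'b \<times> 'c) \<times> (('a \<times> 'b \<times> 'c) \<times> ('a \<times> 'b \<times> 'c)). norm (snd (snd x)) = 1}"
      by (intro closed_Collect_eq continuous_intros)
    have "closed ((\<lambda>p::real \<times> ('a \<times> 'b \<times> 'c) \<times> (('a \<times> 'b \<times> 'c) \<times> ('a \<times> 'b \<times> 'c)). (fst (snd p), dilr (fst p) (fst (snd p)))) -` tsupp chi)"
      by (rule closed_vimage[OF _ contd]) (use K compact_imp_closed in blast)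
    then show "closed {x::real \<times> ('a \<times> 'b \<times> 'c) \<times> (('a \<times> 'b \<times> 'c) \<times> ('a \<times> 'b \<times> 'c)). (fst (snd x), dilr (fst x) (fst (snd x))) \<in> tsupp chi}"
      by (simp add: vimage_def)
    have "closed ((\<lambda>p::real \<times> ('a \<times> 'b \<times> 'c) \<times> (('a \<times> 'b \<times> 'c) \<times> ('a \<times> 'b \<times> 'c)). snd (snd p)) -` V)"
      by (rule closed_vimage[OF Vc]) (intro continuous_intros)
    then show "closed {x::real \<times> ('a \<times> 'b \<times> 'c) \<times> (('a \<times> 'b \<times> 'c) \<times> ('a \<times> 'b \<times> 'c)). snd (snd x) \<in> V}"
      by (simp add: vimage_def)
  qed
  have bdT: "bounded T"
  proof -
    have "norm p \<le> 1 + R + 1" if "p \<in> T" for p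
    proof -
      obtain e z w where p: "p = (e, z, w)" by (cases p) auto
      have e: "0 \<le> e" "e \<le> 1" using that p unfolding T_def
        by auto (meson exp_le_one_iff neg_le_0_iff_le order_trans zero_le_one)
      have "norm z \<le> norm (z, dilr e z)" by (rule norm_fst_le)
      also have "\<dots> \<le> R" using R that p unfolding T_def by auto
      finally have nz: "norm z \<le> R" .
      have nw: "norm w = 1" using that p unfolding T_def by auto
      have "norm p \<le> norm e + norm (z, w)" unfolding p by (rule norm_Pair_le)
      also have "\<dots> \<le> norm e + (norm z + norm w)" using norm_Pair_le[of z w] by simp
      finally show ?thesis using nz nw e by simp
    qed
    then show ?thesis unfolding bounded_iff by blast
  qed
  have cT: "compact T" using clT bdT by (simp add: compact_eq_bounded_closed)
  have pos: "\<phi> p > 0" if "p \<in> T" for p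
  proof -
    obtain e z w where p: "p = (e, z, w)" by (cases p) auto
    have "fst w + dilr e (snd w) \<noteq> 0"
      by (rule twist_mem[OF disj]) (use that p in \<open>auto simp: T_def\<close>)
    then show ?thesis by (simp add: \<phi>_def p)
  qed
  have scale: "\<phi> (e, z, w) = norm w * \<phi> (e, z, (1 / norm w) *\<^sub>R w)" if "w \<noteq> 0" for e z w
  proof -
    have "fst ((1 / norm w) *\<^sub>R w) + dilr e (snd ((1 / norm w) *\<^sub>R w)) = (1 / norm w) *\<^sub>R (fst w + dilr e (snd w))"
      by (simp add: dilr_scale scaleR_add_right)
    then show ?thesis using that by (simp add: \<phi>_def)
  qed
  show ?thesis
  proof (cases "T = {}")
    case True
    show ?thesis
    proof (intro exI[of _ 1] conjI allI impI)
      fix e z w assume a: "0 \<le> e" "e \<le> exp (-1)" "(z, dilr e z) \<in> tsupp chi" "w \<in> V"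
      have "w = 0"
      proof (rule ccontr)
        assume "w \<noteq> 0"
        then have "(e, z, (1 / norm w) *\<^sub>R w) \<in> T" using a Vcone[of w "1 / norm w"] by (simp add: T_def)
        then show False using True by simp
      qed
      then show "1 * norm w \<le> norm (fst w + dilr e (snd w))" by simp
    qed simp
  next
    case False
    obtain p0 where p0: "p0 \<in> T" "\<And>q. q \<in> T \<Longrightarrow> \<phi> p0 \<le> \<phi> q"
      using continuous_attains_inf[OF cT False continuous_on_subset[OF contphi]] by blast
    show ?thesis
    proof (intro exI[of _ "\<phi> p0"] conjI allI impI)
      show "\<phi> p0 > 0" by (rule pos[OF p0(1)])
      fix e z w assume a: "0 \<le> e" "e \<le> exp (-1)" "(z, dilr e z) \<in> tsupp chi" "w \<in> V"
      show "\<phi> p0 * norm w \<le> norm (fst w + dilr e (snd w))"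
      proof (cases "w = 0")
        case True then show ?thesis by simp
      next
        case False
        then have "(e, z, (1 / norm w) *\<^sub>R w) \<in> T" using a Vcone[of w "1 / norm w"] by (simp add: T_def)
        then have "\<phi> p0 \<le> \<phi> (e, z, (1 / norm w) *\<^sub>R w)" by (rule p0(2))
        then have "\<phi> p0 * norm w \<le> \<phi> (e, z, (1 / norm w) *\<^sub>R w) * norm w" by (simp add: mult_right_mono)
        also have "\<dots> = \<phi> (e, z, w)" using scale[OF False] by simp
        finally show ?thesis by (simp add: \<phi>_def)
      qed
    qed
  qed
qed



lemma notin_tsupp: "z \<notin> tsupp f \<Longrightarrow> f z = 0"
  unfolding tsupp_def by (metis (mono_tags) closure_subset mem_Collect_eq subsetD)

lemma comp_facts:
  fixes f :: "(('a::euclidean_space \<times> 'b::euclidean_space \<times> 'c::euclidean_space) \<times> ('a \<times> 'b \<times> 'c)) \<Rightarrow> complex"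
  assumes tf: "test_fn f" and R: "\<And>p. p \<in> tsupp f \<Longrightarrow> norm p \<le> R" and e: "0 \<le> e" "e \<le> 1"
  shows "smooth_fn (\<lambda>z. f (z, dilr e z))" "continuous_on UNIV (\<lambda>z. f (z, dilr e z))"
    "\<And>z. R < norm z \<Longrightarrow> f (z, dilr e z) = 0"
proof -
  have sm: "smooth_fn f" using tf by (simp add: test_fn_def)
  show sm2: "smooth_fn (\<lambda>z. f (z, dilr e z))" by (rule smooth_compose_linear[OF sm L_linear])
  show "continuous_on UNIV (\<lambda>z. f (z, dilr e z))" by (rule smooth_cont0[OF sm2])
  fix z :: "'a \<times> 'b \<times> 'c" assume z: "R < norm z"
  have "(z, dilr e z) \<notin> tsupp f"
  proof
    assume "(z, dilr e z) \<in> tsupp f"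
    then have "norm (z, dilr e z) \<le> R" by (rule R)
    then show False using z norm_fst_le[of z "dilr e z"] by linarith
  qed
  then show "f (z, dilr e z) = 0" by (rule notin_tsupp)
qed

lemma exp_m1_le1: "exp (-1::real) \<le> 1" by simp

lemma main_est:
  fixes chi :: "(('a::euclidean_space \<times> 'b::euclidean_space \<times> 'c::euclidean_space) \<times> ('a \<times> 'b \<times> 'c)) \<Rightarrow> complex"
  assumes tf: "test_fn chi" and V: "closed_cone V"
    and disj: "(tsupp chi \<times> V) \<inter> twist (Gamma_rho :: ((('a \<times> 'b \<times> 'c) \<times> ('a \<times> 'b \<times> 'c)) \<times> (('a \<times> 'b \<times> 'c) \<times> ('a \<times> 'b \<times> 'c))) set) = {}"
  shows "\<exists>C. \<forall>l\<in>{l::ereal. 1 \<le> l}. \<forall>\<xi>\<in>V.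
            (1 + norm \<xi>) ^ N * norm (delta_fam l (\<lambda>w. chi w * cis (- (\<xi> \<bullet> w)))) \<le> C"
proof -
  have sm: "smooth_fn chi" and cK: "compact (tsupp chi)" using tf by (auto simp: test_fn_def)
  obtain R0 where R0: "\<And>p. p \<in> tsupp chi \<Longrightarrow> norm p \<le> R0"
    using compact_imp_bounded[OF cK] by (meson bounded_iff)
  define R where "R = max R0 0"
  have R: "\<And>p. p \<in> tsupp chi \<Longrightarrow> norm p \<le> R" and R0': "R \<ge> 0"
    using R0 by (force simp: R_def)+
  obtain c where c: "c > 0" and cb: "\<And>e z w. 0 \<le> e \<Longrightarrow> e \<le> exp (-1) \<Longrightarrow> (z, dilr e z) \<in> tsupp chi \<Longrightarrow> w \<in> V \<Longrightarrow>
            c * norm w \<le> norm (fst w + dilr e (snd w))"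
    using cone_bound[OF cK V disj] by blast
  obtain B0 where B0: "B0 \<ge> 0" "\<And>r vs z. r \<ge> 0 \<and> length vs = 0 \<and> (\<forall>v\<in>set vs. norm v \<le> r) \<Longrightarrow>
            norm (dderiv chi vs z) \<le> (real DIM(('a \<times> 'b \<times> 'c) \<times> ('a \<times> 'b \<times> 'c)) * r) ^ 0 * B0"
    using test_fn_bound[OF tf, of 0] by blast
  have B0': "norm (chi p) \<le> B0" for p using B0(2)[of 0 "[]" p] by simp
  obtain BN where BN: "BN \<ge> 0" "\<And>r vs z. r \<ge> 0 \<and> length vs = N \<and> (\<forall>v\<in>set vs. norm v \<le> r) \<Longrightarrow>
            norm (dderiv chi vs z) \<le> (real DIM(('a \<times> 'b \<times> 'c) \<times> ('a \<times> 'b \<times> 'c)) * r) ^ N * BN"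
    using test_fn_bound[OF tf, of N] by blast
  define D where "D = real DIM(('a \<times> 'b \<times> 'c) \<times> ('a \<times> 'b \<times> 'c))"
  have D0: "D \<ge> 0" by (simp add: D_def)
  define C0 where "C0 = B0 * measure lborel (cball (0::'a \<times> 'b \<times> 'c) R)"
  define C1 where "C1 = (D * pi) ^ N * BN * measure lborel (cball (0::'a \<times> 'b \<times> 'c) (R + N * pi))"
  have C0: "C0 \<ge> 0" unfolding C0_def using B0 by simp
  have C1: "C1 \<ge> 0" unfolding C1_def using BN D0 by simp
  show ?thesis
  proof (intro exI[of _ "(1 + 1 / c) ^ N * (C0 + C1)"] ballI)
    fix l :: ereal and \<xi> :: "('a \<times> 'b \<times> 'c) \<times> ('a \<times> 'b \<times> 'c)"
    assume l: "l \<in> {l. 1 \<le> l}" and xi: "\<xi> \<in> V"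
    define e where "e = escale l"
    have e: "0 \<le> e" "e \<le> exp (-1)" using escale_range[of l] l by (auto simp: e_def)
    have e1: "e \<le> 1" using e(2) by (meson exp_le_one_iff neg_le_0_iff_le order_trans zero_le_one)
    define g where "g z = chi (z, dilr e z)" for z
    define u where "u = fst \<xi> + dilr e (snd \<xi>)"
    have gsm: "smooth_fn g" and gc: "continuous_on UNIV g" and gs: "\<And>z. R < norm z \<Longrightarrow> g z = 0"
      using comp_facts[OF tf R e(1) e1] unfolding g_def[abs_def] by auto
    have F: "delta_fam l (\<lambda>w. chi w * cis (- (\<xi> \<bullet> w))) = integral\<^sup>L lborel (\<lambda>z. g z * cis (- (u \<bullet> z)))"
      unfolding delta_fam_def g_def u_def dil_dilr e_def[symmetric] L_inner ..
    define F where "F = integral\<^sup>L lborel (\<lambda>z. g z * cis (- (u \<bullet> z)))"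
    have Fge: "norm F \<ge> 0" by simp
    have pc: "(1 + 1 / c) ^ N \<ge> 0" using c by simp
    show "(1 + norm \<xi>) ^ N * norm (delta_fam l (\<lambda>w. chi w * cis (- (\<xi> \<bullet> w)))) \<le> (1 + 1 / c) ^ N * (C0 + C1)"
    proof (cases "\<exists>z. (z, dilr e z) \<in> tsupp chi")
      case False
      then have "g = (\<lambda>_. 0)" unfolding g_def by (intro ext notin_tsupp) blast
      then show ?thesis unfolding F using pc C0 C1 by simp
    next
      case True
      then obtain z0 where z0: "(z0, dilr e z0) \<in> tsupp chi" by blast
      have cu: "c * norm \<xi> \<le> norm u" unfolding u_def by (rule cb[OF e z0 xi])
      have F0: "norm F \<le> C0"
        unfolding F_def C0_def
      proof (rule integral_bound_supp)
        show "continuous_on UNIV (\<lambda>z. g z * cis (- (u \<bullet> z)))" by (intro continuous_on_mult gc cis_cont)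
        fix z :: "'a \<times> 'b \<times> 'c"
        show "R < norm z \<Longrightarrow> g z * cis (- (u \<bullet> z)) = 0" using gs by simp
        show "norm (g z * cis (- (u \<bullet> z))) \<le> B0" using B0' by (simp add: g_def norm_mult)
      qed
      show ?thesis
      proof (cases "norm u \<ge> 1")
        case False
        have "norm \<xi> \<le> 1 / c" using cu c False by (simp add: field_simps)
        then have "(1 + norm \<xi>) ^ N \<le> (1 + 1 / c) ^ N" by (intro power_mono) auto
        then have "(1 + norm \<xi>) ^ N * norm F \<le> (1 + 1 / c) ^ N * C0"
          using F0 pc by (metis mult_mono norm_ge_zero)
        also have "\<dots> \<le> (1 + 1 / c) ^ N * (C0 + C1)" using C1 pc by (intro mult_left_mono) auto
        finally show ?thesis unfolding F F_def .
      next
        case True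
        have u0: "norm u > 0" using True by linarith
        define d where "d = (pi / (norm u)\<^sup>2) *\<^sub>R u"
        have ud: "u \<bullet> d = pi" using u0 by (simp add: d_def power2_norm_eq_inner[symmetric])
        have nd: "norm d = pi / norm u" using u0 by (simp add: d_def power2_eq_square)
        have ndpi: "norm d \<le> pi" unfolding nd using True by (simp add: divide_le_eq pi_ge_zero)
        have Mb: "norm (dderiv g (replicate N d) y) \<le> (D * (2 * norm d)) ^ N * BN" for y
        proof -
          have "dderiv g (replicate N d) y = dderiv chi (replicate N (d, dilr e d)) (y, dilr e y)"
            unfolding g_def by (simp add: dderiv_compose_linear[OF sm L_linear] map_replicate)
          also have "norm \<dots> \<le> (D * (2 * norm d)) ^ N * BN"
            unfolding D_def using L_norm(2)[OF e(1) e1, of d] by (intro BN(2)) auto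
          finally show ?thesis .
        qed
        have dec: "2 ^ N * norm F \<le> (D * (2 * norm d)) ^ N * BN * measure lborel (cball (0::'a \<times> 'b \<times> 'c) (R + N * pi))"
          unfolding F_def by (rule decay[OF gsm gs ud ndpi Mb])
        have "(D * (2 * norm d)) ^ N = 2 ^ N * ((D * pi) ^ N / norm u ^ N)"
          unfolding nd by (simp add: power_mult_distrib power_divide)
        then have "2 ^ N * norm F \<le> 2 ^ N * ((D * pi) ^ N / norm u ^ N * BN * measure lborel (cball (0::'a \<times> 'b \<times> 'c) (R + N * pi)))"
          using dec by (simp add: mult.assoc)
        then have "norm F \<le> (D * pi) ^ N / norm u ^ N * BN * measure lborel (cball (0::'a \<times> 'b \<times> 'c) (R + N * pi))"
          by (rule mult_left_le_imp_le) simp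
        then have "norm F \<le> C1 / norm u ^ N" unfolding C1_def by (simp add: field_simps)
        then have F1: "norm u ^ N * norm F \<le> C1" using u0 by (simp add: field_simps)
        have "1 + norm \<xi> \<le> (1 + 1 / c) * norm u"
        proof (rule mult_left_le_imp_le[of c])
          have h2: "c * 1 \<le> c * norm u" using True c by (intro mult_left_mono) auto
          have "c * ((1 + 1 / c) * norm u) = c * norm u + norm u" using c by (simp add: field_simps)
          then show "c * (1 + norm \<xi>) \<le> c * ((1 + 1 / c) * norm u)"
            using h2 cu by (simp add: distrib_left)
        qed (use c in auto)
        then have "(1 + norm \<xi>) ^ N \<le> ((1 + 1 / c) * norm u) ^ N" by (intro power_mono) auto
        then have "(1 + norm \<xi>) ^ N * norm F \<le> ((1 + 1 / c) * norm u) ^ N * norm F"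
          by (intro mult_right_mono) auto
        also have "\<dots> = (1 + 1 / c) ^ N * (norm u ^ N * norm F)" by (simp add: power_mult_distrib)
        also have "\<dots> \<le> (1 + 1 / c) ^ N * C1" using F1 pc by (intro mult_left_mono) auto
        also have "\<dots> \<le> (1 + 1 / c) ^ N * (C0 + C1)" using C0 pc by (intro mult_left_mono) auto
        finally show ?thesis unfolding F F_def .
      qed
    qed
  qed
qed



lemma integrable_comp:
  fixes f :: "(('a::euclidean_space \<times> 'b::euclidean_space \<times> 'c::euclidean_space) \<times> ('a \<times> 'b \<times> 'c)) \<Rightarrow> complex"
  assumes tf: "test_fn f" and e: "0 \<le> e" "e \<le> 1"
  shows "integrable lborel (\<lambda>z. f (z, dilr e z))"
proof -
  obtain R where R: "\<And>p. p \<in> tsupp f \<Longrightarrow> norm p \<le> R"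
    using compact_imp_bounded tf unfolding test_fn_def by (meson bounded_iff)
  show ?thesis
    by (rule integrable_supp[OF comp_facts(2)[OF tf R e] comp_facts(3)[OF tf R e]])
qed

lemma escale_le1: "1 \<le> l \<Longrightarrow> 0 \<le> escale l \<and> escale l \<le> 1"
  using escale_range[of l] by (meson exp_le_one_iff neg_le_0_iff_le order_trans zero_le_one)

theorem lemma3p2:
  shows "bounded_in_DGamma
           (twist (Gamma_rho :: ((('a::euclidean_space \<times> 'b::euclidean_space \<times> 'c::euclidean_space)
               \<times> ('a \<times> 'b \<times> 'c)) \<times> (('a \<times> 'b \<times> 'c) \<times> ('a \<times> 'b \<times> 'c))) set))
           delta_fam {l::ereal. 1 \<le> l}"
  unfolding bounded_in_DGamma_def
proof (intro conjI allI impI ballI)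
  fix l :: ereal and f g :: "(('a \<times> 'b \<times> 'c) \<times> ('a \<times> 'b \<times> 'c)) \<Rightarrow> complex" and a b :: complex
  assume l: "l \<in> {l. 1 \<le> l}" and fg: "test_fn f \<and> test_fn g"
  have e: "0 \<le> escale l" "escale l \<le> 1" using escale_le1 l by auto
  have i1: "integrable lborel (\<lambda>z. f (z, dilr (escale l) z))" using integrable_comp fg e by blast
  have i2: "integrable lborel (\<lambda>z. g (z, dilr (escale l) z))" using integrable_comp fg e by blast
  show "delta_fam l (\<lambda>w. a * f w + b * g w) = a * delta_fam l f + b * delta_fam l g"
    unfolding delta_fam_def dil_dilr
    by (simp add: Bochner_Integration.integral_add Bochner_Integration.integral_mult_right i1 i2)
next
  fix B :: "((('a \<times> 'b \<times> 'c) \<times> ('a \<times> 'b \<times> 'c)) \<Rightarrow> complex) set"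
  assume B: "bounded_testset B"
  obtain K where K: "compact K" "\<And>f. f \<in> B \<Longrightarrow> tsupp f \<subseteq> K" using B unfolding bounded_testset_def by blast
  obtain C where C: "\<And>f vs z. f \<in> B \<Longrightarrow> length vs = 0 \<and> (\<forall>v\<in>set vs. norm v \<le> 1) \<Longrightarrow> norm (dderiv f vs z) \<le> C"
    using B unfolding bounded_testset_def by meson
  have C': "norm (f z) \<le> C" if "f \<in> B" for f z using C[OF that, of "[]" z] by simp
  obtain R where R: "\<And>p. p \<in> K \<Longrightarrow> norm p \<le> R"
    using compact_imp_bounded[OF K(1)] by (meson bounded_iff)
  show "\<exists>C. \<forall>l\<in>{l. 1 \<le> l}. \<forall>f\<in>B. norm (delta_fam l f) \<le> C"
  proof (intro exI[of _ "C * measure lborel (cball (0::'a \<times> 'b \<times> 'c) R)"] ballI)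
    fix l :: ereal and f assume l: "l \<in> {l. 1 \<le> l}" and f: "f \<in> B"
    have e: "0 \<le> escale l" "escale l \<le> 1" using escale_le1 l by auto
    have tf: "test_fn f" using B f unfolding bounded_testset_def by blast
    have R': "\<And>p. p \<in> tsupp f \<Longrightarrow> norm p \<le> R" using K(2)[OF f] R by blast
    show "norm (delta_fam l f) \<le> C * measure lborel (cball (0::'a \<times> 'b \<times> 'c) R)"
      unfolding delta_fam_def dil_dilr
      by (rule integral_bound_supp[OF comp_facts(2)[OF tf R' e] comp_facts(3)[OF tf R' e]]) (use C'[OF f] in auto)
  qed
next
  fix N :: nat and chi V
  assume a: "test_fn chi \<and> closed_cone V \<and> (tsupp chi \<times> V) \<inter> twist (Gamma_rho :: ((('a \<times> 'b \<times> 'c)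
               \<times> ('a \<times> 'b \<times> 'c)) \<times> (('a \<times> 'b \<times> 'c) \<times> ('a \<times> 'b \<times> 'c))) set) = {}"
  then show "\<exists>C. \<forall>l\<in>{l. 1 \<le> l}. \<forall>\<xi>\<in>V. (1 + norm \<xi>) ^ N * norm (delta_fam l (\<lambda>w. chi w * cis (- (\<xi> \<bullet> w)))) \<le> C"
    using main_est by blast
qed

end
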